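(* Assume (A0), (A1), (A2) below. Then there is a positive constant $M$ such that $n_0^2\,|\Xi^3_i|\le M$ for all $i$ (and all $k$). (A0) For $i=1,\dots,k$, $\mathbf{X}_i=\{X_{i1},\dots,X_{in_i}\}$ is a random sample of size $n_i\ge2m$ from the distribution of a random element $X_i$ of a measurable space $(E,\mathcal{E})$, the samples independent. (A1) There is $M>0$ with $\mathbb{E}\{h^2(X_{i1},\dots,X_{im})\}<M$ for all $i$, $k$. (A2) $n_i=c_in_0$ with $n_0\ge2m$ and $1\le c_i\le C$ for a constant $C>0$.
   Context: $m\ge1$ is fixed and $h:E^m\to\mathbb{R}$ is a symmetric kernel; distributions and sample sizes may depend on $k$. Let $\theta_i=\mathbb{E}\{h(X_{i1},\dots,X_{im})\}$, and for $0\le c\le m$ let $h_{c}(x_1,\dots,x_c)=\mathbb{E}\{h(X_{i1},\dots,X_{im})\mid X_{i1}=x_1,\dots,X_{ic}=x_c\}$ (with $h_0=\theta_i$), $\widetilde{h}_c=h_c-\theta_i$, and $\widetilde{\zeta}^3_{i(c,j)}=\mathrm{Cov}\{\widetilde{h}_c(X_{i1},\dots,X_{ic}),\widetilde{h}_j(X_{i1},\dots,X_{ij})\widetilde{h}_{c-j}(X_{i(j+1)},\dots,X_{ic})\}$. Define $$\Xi^3_i=4\binom{n_i}{2m}^{-1}\binom{2m}{m}^{-1}\sum_{c=1}^m\binom{n_i-m}{2m-c}\binom{m}{c}\sum_{j=1}^c\binom{c}{j}\binom{2m-c}{m-j}\widetilde{\zeta}^3_{i(c,j)},$$ with $\binom{a}{b}=0$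 if $b>a$. *)

theory Defs
  imports "HOL-Probability.Probability" "HOL-Combinatorics.Permutations"
begin

text \<open>All samples are i.i.d. from a distribution P on E; expectations of functions of
  (X_1,...,X_r) are therefore integrals w.r.t. the product measure P^r.
  Coordinates are indexed 0,...,r-1.\<close>

definition sym_kernel :: "'a measure \<Rightarrow> nat \<Rightarrow> ((nat \<Rightarrow> 'a) \<Rightarrow> real) \<Rightarrow> bool" where
  "sym_kernel E m h \<longleftrightarrow>
     h \<in> borel_measurable (PiM {..<m} (\<lambda>_. E)) \<and>
     (\<forall>\<sigma> x. \<sigma> permutes {..<m} \<longrightarrow> x \<in> space (PiM {..<m} (\<lambda>_. E)) \<longrightarrow> h (x \<circ> \<sigma>) = h x)"

definition theta :: "'a measure \<Rightarrow> nat \<Rightarrow> ((nat \<Rightarrow> 'a) \<Rightarrow> real) \<Rightarrow> real" where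
  "theta P m h = (\<integral>y. h y \<partial>(PiM {..<m} (\<lambda>_. P)))"

text \<open>h_c(x_1,...,x_c) = E{h(X_1..X_m) | X_1=x_1..X_c=x_c}
  (the canonical version, integrating out the remaining independent coordinates)\<close>
definition hc :: "'a measure \<Rightarrow> nat \<Rightarrow> ((nat \<Rightarrow> 'a) \<Rightarrow> real) \<Rightarrow> nat \<Rightarrow> (nat \<Rightarrow> 'a) \<Rightarrow> real" where
  "hc P m h c x = (\<integral>y. h (\<lambda>j\<in>{..<m}. if j < c then x j else y j) \<partial>(PiM {c..<m} (\<lambda>_. P)))"

definition htilde :: "'a measure \<Rightarrow> nat \<Rightarrow> ((nat \<Rightarrow> 'a) \<Rightarrow> real) \<Rightarrow> nat \<Rightarrow> (nat \<Rightarrow> 'a) \<Rightarrow> real" where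
  "htilde P m h c x = hc P m h c x - theta P m h"

definition cov :: "'b measure \<Rightarrow> ('b \<Rightarrow> real) \<Rightarrow> ('b \<Rightarrow> real) \<Rightarrow> real" where
  "cov M U V = (\<integral>\<omega>. (U \<omega> - (\<integral>z. U z \<partial>M)) * (V \<omega> - (\<integral>z. V z \<partial>M)) \<partial>M)"

definition zeta3 :: "'a measure \<Rightarrow> nat \<Rightarrow> ((nat \<Rightarrow> 'a) \<Rightarrow> real) \<Rightarrow> nat \<Rightarrow> nat \<Rightarrow> real" where
  "zeta3 P m h c j = cov (PiM {..<c} (\<lambda>_. P))
      (\<lambda>x. htilde P m h c x)
      (\<lambda>x. htilde P m h j x * htilde P m h (c - j) (\<lambda>l. x (l + j)))"

definition Xi3 :: "'a measure \<Rightarrow> nat \<Rightarrow> ((nat \<Rightarrow> 'a) \<Rightarrow> real) \<Rightarrow> nat \<Rightarrow> real" where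
  "Xi3 P m h n = 4 / (real (n choose (2*m)) * real ((2*m) choose m)) *
     (\<Sum>c=1..m. real ((n - m) choose (2*m - c)) * real (m choose c) *
        (\<Sum>j=1..c. real (c choose j) * real ((2*m - c) choose (m - j)) * zeta3 P m h c j))"

end

theory Submission
  imports Defs
begin


lemma sq_int_le:
  fixes f :: "'b \<Rightarrow> real"
  assumes "prob_space M"
  shows "ennreal ((\<integral>x. f x \<partial>M)\<^sup>2) \<le> (\<integral>\<^sup>+x. ennreal ((f x)\<^sup>2) \<partial>M)"
proof (cases "integrable M f")
  case False
  then show ?thesis by (simp add: not_integrable_integral_eq)
next
  case True
  interpret prob_space M by fact
  have fm[measurable]: "f \<in> borel_measurable M" using True by auto
  show ?thesis
  proof (cases "(\<integral>\<^sup>+x. ennreal ((f x)\<^sup>2) \<partial>M) < \<infinity>")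
    case False
    then show ?thesis using top.not_eq_extremum by fastforce
  next
    case fin: True
    have sq: "integrable M (\<lambda>x. (f x)\<^sup>2)"
      by (rule integrableI_bounded) (use fin in auto)
    have "0 \<le> variance f" by (rule variance_positive)
    then have "(expectation f)\<^sup>2 \<le> expectation (\<lambda>x. (f x)\<^sup>2)"
      using variance_eq[OF True sq] by simp
    also have "ennreal (expectation (\<lambda>x. (f x)\<^sup>2)) = (\<integral>\<^sup>+x. ennreal ((f x)\<^sup>2) \<partial>M)"
      by (rule nn_integral_eq_integral[symmetric]) (use sq in auto)
    finally show ?thesis
      by (metis ennreal_leI \<open>(expectation f)\<^sup>2 \<le> expectation (\<lambda>x. (f x)\<^sup>2)\<close> \<open>ennreal (expectation (\<lambda>x. (f x)\<^sup>2)) = _\<close>)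
  qed
qed

lemma hc_cong:
  assumes "\<And>l. l < c \<Longrightarrow> x l = x' l"
  shows "hc P m h c x = hc P m h c x'"
proof -
  have "(\<lambda>y. h (\<lambda>j\<in>{..<m}. if j < c then x j else y j)) = (\<lambda>y. h (\<lambda>j\<in>{..<m}. if j < c then x' j else y j))"
    using assms by (intro ext arg_cong[where f=h] restrict_ext) auto
  then show ?thesis unfolding hc_def by simp
qed

lemma htilde_cong:
  assumes "\<And>l. l < c \<Longrightarrow> x l = x' l"
  shows "htilde P m h c x = htilde P m h c x'"
  using hc_cong[OF assms] unfolding htilde_def by simp

lemma htilde_0: "htilde P m h 0 x = 0"
proof -
  have "hc P m h 0 x = (\<integral>y. h y \<partial>(PiM {..<m} (\<lambda>_. P)))"
    unfolding hc_def atLeast0LessThan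
    by (intro Bochner_Integration.integral_cong refl arg_cong[where f=h])
       (auto simp: space_PiM PiE_restrict)
  then show ?thesis unfolding htilde_def theta_def by simp
qed

lemma zeta3_11: "zeta3 P m h 1 1 = 0"
  unfolding zeta3_def cov_def by (simp add: htilde_0)

lemma merge_eq: "(c::nat) \<le> m \<Longrightarrow> (\<lambda>j\<in>{..<m}. if j < c then x j else y j) = merge {..<c} {c..<m} (x, y)"
  by (auto simp: merge_def restrict_def fun_eq_iff not_less dest: order.strict_trans2)

lemma un_split: "(c::nat) \<le> m \<Longrightarrow> {..<c} \<union> {c..<m} = {..<m}" by auto

lemma hc_merge: "(c::nat) \<le> m \<Longrightarrow> hc Q m h c x = (\<integral>y. h (merge {..<c} {c..<m} (x, y)) \<partial>(PiM {c..<m} (\<lambda>_. Q)))"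
  unfolding hc_def by (simp add: merge_eq)

lemma PiM_prob: "prob_space Q \<Longrightarrow> prob_space (PiM I (\<lambda>_. Q))"
  by (rule prob_space_PiM) auto

lemma h_merge_meas:
  fixes m c :: nat and h :: "(nat \<Rightarrow> 'a) \<Rightarrow> real"
  assumes Q: "prob_space Q" and hm: "h \<in> borel_measurable (PiM {..<m} (\<lambda>_. Q))" and cm: "c \<le> m"
  shows "(\<lambda>z. h (merge {..<c} {c..<m} z)) \<in> borel_measurable (PiM {..<c} (\<lambda>_. Q) \<Otimes>\<^sub>M PiM {c..<m} (\<lambda>_. Q))"
proof -
  have "merge {..<c} {c..<m} \<in> measurable (PiM {..<c} (\<lambda>_. Q) \<Otimes>\<^sub>M PiM {c..<m} (\<lambda>_. Q)) (PiM {..<m} (\<lambda>_. Q))"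
    using measurable_merge[of "{..<c}" "{c..<m}" "\<lambda>_. Q"] un_split[OF cm] by simp
  then show ?thesis using hm by (rule measurable_comp[unfolded comp_def])
qed

lemma hc_meas:
  fixes m c :: nat and h :: "(nat \<Rightarrow> 'a) \<Rightarrow> real"
  assumes Q: "prob_space Q" and hm: "h \<in> borel_measurable (PiM {..<m} (\<lambda>_. Q))" and cm: "c \<le> m"
  shows "hc Q m h c \<in> borel_measurable (PiM {..<c} (\<lambda>_. Q))"
proof -
  interpret N: prob_space "PiM {c..<m} (\<lambda>_. Q)" using PiM_prob[OF Q] .
  have "(\<lambda>x. \<integral>y. h (merge {..<c} {c..<m} (x, y)) \<partial>(PiM {c..<m} (\<lambda>_. Q))) \<in> borel_measurable (PiM {..<c} (\<lambda>_. Q))"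
    by (rule N.borel_measurable_lebesgue_integral) (use h_merge_meas[OF Q hm cm] in \<open>simp add: case_prod_beta'\<close>)
  then show ?thesis by (simp add: hc_merge[OF cm, abs_def])
qed

lemma meas_sq:
  fixes f :: "'b \<Rightarrow> real"
  assumes "f \<in> borel_measurable M"
  shows "(\<lambda>x. ennreal ((f x)\<^sup>2)) \<in> borel_measurable M"
  using measurable_compose[OF borel_measurable_power[OF assms, of 2] measurable_ennreal] by simp

lemma hc_sq:
  fixes m c :: nat and h :: "(nat \<Rightarrow> 'a) \<Rightarrow> real"
  assumes Q: "prob_space Q" and hm: "h \<in> borel_measurable (PiM {..<m} (\<lambda>_. Q))" and cm: "c \<le> m"
  shows "(\<integral>\<^sup>+x. ennreal ((hc Q m h c x)\<^sup>2) \<partial>PiM {..<c} (\<lambda>_. Q)) \<le> (\<integral>\<^sup>+x. ennreal ((h x)\<^sup>2) \<partial>PiM {..<m} (\<lambda>_. Q))"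
proof -
  interpret N: prob_space "PiM {c..<m} (\<lambda>_. Q)" using PiM_prob[OF Q] .
  interpret PS: product_sigma_finite "\<lambda>_::nat. Q"
    by (rule product_sigma_finite.intro) (rule prob_space_imp_sigma_finite[OF Q])
  have mz: "(\<lambda>z. ennreal ((h (merge {..<c} {c..<m} z))\<^sup>2)) \<in> borel_measurable (PiM {..<c} (\<lambda>_. Q) \<Otimes>\<^sub>M PiM {c..<m} (\<lambda>_. Q))"
    using meas_sq[OF h_merge_meas[OF Q hm cm]] .
  have "(\<integral>\<^sup>+x. ennreal ((hc Q m h c x)\<^sup>2) \<partial>PiM {..<c} (\<lambda>_. Q))
     \<le> (\<integral>\<^sup>+x. \<integral>\<^sup>+y. ennreal ((h (merge {..<c} {c..<m} (x, y)))\<^sup>2) \<partial>PiM {c..<m} (\<lambda>_. Q) \<partial>PiM {..<c} (\<lambda>_. Q))"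
    by (intro nn_integral_mono) (unfold hc_merge[OF cm], rule sq_int_le[OF N.prob_space_axioms])
  also have "\<dots> = (\<integral>\<^sup>+z. ennreal ((h (merge {..<c} {c..<m} z))\<^sup>2) \<partial>(PiM {..<c} (\<lambda>_. Q) \<Otimes>\<^sub>M PiM {c..<m} (\<lambda>_. Q)))"
    by (rule N.nn_integral_fst[OF mz])
  also have "\<dots> = (\<integral>\<^sup>+w. ennreal ((h w)\<^sup>2) \<partial>distr (PiM {..<c} (\<lambda>_. Q) \<Otimes>\<^sub>M PiM {c..<m} (\<lambda>_. Q)) (PiM ({..<c} \<union> {c..<m}) (\<lambda>_. Q)) (merge {..<c} {c..<m}))"
    by (rule nn_integral_distr[symmetric]) (use hm un_split[OF cm] measurable_merge[of "{..<c}" "{c..<m}" "\<lambda>_. Q", unfolded un_split[OF cm]] in simp_all)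
  also have "\<dots> = (\<integral>\<^sup>+w. ennreal ((h w)\<^sup>2) \<partial>PiM {..<m} (\<lambda>_. Q))"
    by (subst PS.distr_merge) (auto simp: un_split[OF cm])
  finally show ?thesis .
qed



lemma sq_diff_le:
  fixes f :: "'b \<Rightarrow> real"
  assumes M: "prob_space M" and fm: "f \<in> borel_measurable M"
    and fA: "(\<integral>\<^sup>+x. ennreal ((f x)\<^sup>2) \<partial>M) \<le> ennreal A" and A: "0 \<le> A" and aB: "a\<^sup>2 \<le> B"
  shows "(\<integral>\<^sup>+x. ennreal ((f x - a)\<^sup>2) \<partial>M) \<le> ennreal (2*A + 2*B)"
proof -
  interpret prob_space M by fact
  have B: "0 \<le> B" using aB by (meson order_trans zero_le_power2)
  have m2: "(\<lambda>x. 2 * ennreal ((f x)\<^sup>2)) \<in> borel_measurable M" using meas_sq[OF fm] by measurable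
  have "(\<integral>\<^sup>+x. ennreal ((f x - a)\<^sup>2) \<partial>M) \<le> (\<integral>\<^sup>+x. 2 * ennreal ((f x)\<^sup>2) + ennreal (2 * a\<^sup>2) \<partial>M)"
  proof (intro nn_integral_mono)
    fix x
    have "(f x - a)\<^sup>2 \<le> 2 * (f x)\<^sup>2 + 2 * a\<^sup>2"
    proof -
      have "0 \<le> (f x + a)\<^sup>2" by simp
      then show ?thesis unfolding power2_diff power2_sum by linarith
    qed
    then have "ennreal ((f x - a)\<^sup>2) \<le> ennreal (2 * (f x)\<^sup>2 + 2 * a\<^sup>2)" by (rule ennreal_leI)
    also have "\<dots> = 2 * ennreal ((f x)\<^sup>2) + ennreal (2 * a\<^sup>2)"
      by (simp add: ennreal_plus[symmetric] ennreal_mult)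
    finally show "ennreal ((f x - a)\<^sup>2) \<le> 2 * ennreal ((f x)\<^sup>2) + ennreal (2 * a\<^sup>2)" .
  qed
  also have "\<dots> = 2 * (\<integral>\<^sup>+x. ennreal ((f x)\<^sup>2) \<partial>M) + ennreal (2 * a\<^sup>2)"
    using meas_sq[OF fm]
    by (simp only: nn_integral_add[OF m2 borel_measurable_const]
          nn_integral_cmult[OF meas_sq[OF fm]] nn_integral_const emeasure_space_1 mult_1_right)
  also have "\<dots> \<le> 2 * ennreal A + ennreal (2 * B)"
    using fA aB by (intro add_mono mult_left_mono ennreal_leI) auto
  also have "\<dots> = ennreal (2*A + 2*B)"
    using A B by (simp add: ennreal_plus[symmetric] ennreal_mult)
  finally show ?thesis .
qed


lemma fg_bound:
  fixes f g :: "'b \<Rightarrow> real"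
  assumes fm: "f \<in> borel_measurable M" and gm: "g \<in> borel_measurable M"
    and fA: "(\<integral>\<^sup>+x. ennreal ((f x)\<^sup>2) \<partial>M) \<le> ennreal A"
    and gB: "(\<integral>\<^sup>+x. ennreal ((g x)\<^sup>2) \<partial>M) \<le> ennreal B"
    and A: "0 \<le> A" and B: "0 \<le> B"
  shows "\<bar>\<integral>x. f x * g x \<partial>M\<bar> \<le> (A + B) / 2"
proof (cases "integrable M (\<lambda>x. f x * g x)")
  case False
  then show ?thesis using A B by (simp add: not_integrable_integral_eq)
next
  case True
  have "ennreal (2 * \<bar>\<integral>x. f x * g x \<partial>M\<bar>) = 2 * ennreal (norm (\<integral>x. f x * g x \<partial>M))"
    by (simp add: ennreal_mult)
  also have "\<dots> \<le> 2 * (\<integral>\<^sup>+x. norm (f x * g x) \<partial>M)"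
    by (intro mult_left_mono integral_norm_bound_ennreal True) auto
  also have "\<dots> = (\<integral>\<^sup>+x. 2 * ennreal (norm (f x * g x)) \<partial>M)"
    by (rule nn_integral_cmult[symmetric]) (use fm gm in measurable)
  also have "\<dots> \<le> (\<integral>\<^sup>+x. ennreal ((f x)\<^sup>2) + ennreal ((g x)\<^sup>2) \<partial>M)"
  proof (intro nn_integral_mono)
    fix x
    have "2 * \<bar>f x * g x\<bar> \<le> (f x)\<^sup>2 + (g x)\<^sup>2"
    proof -
      have "0 \<le> (\<bar>f x\<bar> - \<bar>g x\<bar>)\<^sup>2" by simp
      then show ?thesis unfolding power2_diff abs_mult by simp
    qed
    then have "ennreal (2 * \<bar>f x * g x\<bar>) \<le> ennreal ((f x)\<^sup>2 + (g x)\<^sup>2)" by (rule ennreal_leI)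
    then show "2 * ennreal (norm (f x * g x)) \<le> ennreal ((f x)\<^sup>2) + ennreal ((g x)\<^sup>2)"
      by (metis abs_ge_zero ennreal_mult ennreal_numeral real_norm_def zero_le_numeral ennreal_plus zero_le_power2)
  qed
  also have "\<dots> = (\<integral>\<^sup>+x. ennreal ((f x)\<^sup>2) \<partial>M) + (\<integral>\<^sup>+x. ennreal ((g x)\<^sup>2) \<partial>M)"
    using meas_sq[OF fm] meas_sq[OF gm] by (rule nn_integral_add)
  also have "\<dots> \<le> ennreal A + ennreal B" using fA gB by (rule add_mono)
  also have "\<dots> = ennreal (A + B)" by (rule ennreal_plus[OF A B, symmetric])
  finally have "2 * \<bar>\<integral>x. f x * g x \<partial>M\<bar> \<le> A + B"
    by (subst (asm) ennreal_le_iff) (use A B in auto)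
  then show ?thesis by simp
qed


lemma cov_bound:
  fixes U V :: "'b \<Rightarrow> real"
  assumes M: "prob_space M" and Um: "U \<in> borel_measurable M" and Vm: "V \<in> borel_measurable M"
    and UA: "(\<integral>\<^sup>+x. ennreal ((U x)\<^sup>2) \<partial>M) \<le> ennreal A"
    and VB: "(\<integral>\<^sup>+x. ennreal ((V x)\<^sup>2) \<partial>M) \<le> ennreal B"
    and A: "0 \<le> A" and B: "0 \<le> B"
  shows "\<bar>cov M U V\<bar> \<le> 2 * A + 2 * B"
proof -
  have a: "(\<integral>z. U z \<partial>M)\<^sup>2 \<le> A"
    using order_trans[OF sq_int_le[OF M] UA] A by (simp add: ennreal_le_iff)
  have b: "(\<integral>z. V z \<partial>M)\<^sup>2 \<le> B"
    using order_trans[OF sq_int_le[OF M] VB] B by (simp add: ennreal_le_iff)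
  have u: "(\<integral>\<^sup>+x. ennreal ((U x - (\<integral>z. U z \<partial>M))\<^sup>2) \<partial>M) \<le> ennreal (2*A + 2*A)"
    by (rule sq_diff_le[OF M Um UA A a])
  have v: "(\<integral>\<^sup>+x. ennreal ((V x - (\<integral>z. V z \<partial>M))\<^sup>2) \<partial>M) \<le> ennreal (2*B + 2*B)"
    by (rule sq_diff_le[OF M Vm VB B b])
  have "\<bar>cov M U V\<bar> \<le> ((2*A + 2*A) + (2*B + 2*B)) / 2"
    unfolding cov_def
    by (rule fg_bound[OF borel_measurable_diff[OF Um borel_measurable_const] borel_measurable_diff[OF Vm borel_measurable_const] u v]) (use A B in auto)
  then show ?thesis by simp
qed



lemma prod_meas:
  fixes j c :: nat and F G :: "(nat \<Rightarrow> 'a) \<Rightarrow> real"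
  assumes Q: "prob_space Q" and jc: "j \<le> c"
    and Fm: "F \<in> borel_measurable (PiM {..<j} (\<lambda>_. Q))"
    and Gm: "G \<in> borel_measurable (PiM {..<c-j} (\<lambda>_. Q))"
    and Floc: "\<And>x x'. (\<And>l. l < j \<Longrightarrow> x l = x' l) \<Longrightarrow> F x = F x'"
  shows "(\<lambda>x. F x * G (\<lambda>l. x (l + j))) \<in> borel_measurable (PiM {..<c} (\<lambda>_. Q))"
proof -
  have Feq: "F = (\<lambda>w. F (restrict w {..<j}))"
    by (rule ext, rule Floc) simp
  have Fc: "F \<in> borel_measurable (PiM {..<c} (\<lambda>_. Q))"
    by (subst Feq, rule measurable_compose[OF measurable_restrict_subset Fm]) (use jc in auto)
  have shm: "(\<lambda>w. \<lambda>l. w (l + j)) \<in> measurable (PiM {..<c} (\<lambda>_. Q)) (PiM {..<c-j} (\<lambda>_. Q))"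
  proof -
    have A: "(\<lambda>w. \<lambda>l\<in>{..<c-j}. w (l + j)) \<in> measurable (PiM {..<c} (\<lambda>_. Q)) (PiM {..<c-j} (\<lambda>_. Q))"
      by (intro measurable_restrict measurable_component_singleton) auto
    moreover have eqw: "(\<lambda>l\<in>{..<c-j}. w (l + j)) = (\<lambda>l. w (l + j))" if "w \<in> space (PiM {..<c} (\<lambda>_. Q))" for w
    proof
      fix l show "(\<lambda>l\<in>{..<c-j}. w (l + j)) l = w (l + j)"
      proof (cases "l < c - j")
        case True then show ?thesis by simp
      next
        case False
        then have "l + j \<notin> {..<c}" by simp
        moreover have "w \<in> PiE {..<c} (\<lambda>_. space Q)" using that by (simp only: space_PiM)
        ultimately have "w (l + j) = undefined" by (rule PiE_arb[rotated])
        then show ?thesis using False by simp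
      qed
    qed
    show ?thesis
      using measurable_cong[of "PiM {..<c} (\<lambda>_. Q)" "\<lambda>w. \<lambda>l\<in>{..<c-j}. w (l + j)" "\<lambda>w l. w (l + j)" "PiM {..<c-j} (\<lambda>_. Q)"] eqw A
      by blast
  qed
  have Gc: "(\<lambda>w. G (\<lambda>l. w (l + j))) \<in> borel_measurable (PiM {..<c} (\<lambda>_. Q))"
    using measurable_compose[OF shm Gm] .
  show ?thesis by (rule borel_measurable_times[OF Fc Gc])
qed

lemma prod_sq:
  fixes j c :: nat and F G :: "(nat \<Rightarrow> 'a) \<Rightarrow> real"
  assumes Q: "prob_space Q" and jc: "j \<le> c"
    and Fm: "F \<in> borel_measurable (PiM {..<j} (\<lambda>_. Q))"
    and Gm: "G \<in> borel_measurable (PiM {..<c-j} (\<lambda>_. Q))"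
    and Floc: "\<And>x x'. (\<And>l. l < j \<Longrightarrow> x l = x' l) \<Longrightarrow> F x = F x'"
  shows "(\<integral>\<^sup>+x. ennreal ((F x * G (\<lambda>l. x (l + j)))\<^sup>2) \<partial>PiM {..<c} (\<lambda>_. Q))
       = (\<integral>\<^sup>+x. ennreal ((F x)\<^sup>2) \<partial>PiM {..<j} (\<lambda>_. Q)) * (\<integral>\<^sup>+x. ennreal ((G x)\<^sup>2) \<partial>PiM {..<c-j} (\<lambda>_. Q))"
proof -
  let ?T = "merge {..<j} {j..<c}"
  let ?R = "\<lambda>y. \<lambda>l\<in>{..<c-j}. y (l + j)"
  let ?\<nu> = "PiM {j..<c} (\<lambda>_. Q)"
  interpret N: prob_space ?\<nu> using PiM_prob[OF Q] .
  interpret PS: product_sigma_finite "\<lambda>_::nat. Q"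
    by (rule product_sigma_finite.intro) (rule prob_space_imp_sigma_finite[OF Q])
  have un: "{..<j} \<union> {j..<c} = {..<c}" using jc by auto
  have Tm: "?T \<in> measurable (PiM {..<j} (\<lambda>_. Q) \<Otimes>\<^sub>M ?\<nu>) (PiM {..<c} (\<lambda>_. Q))"
    using measurable_merge[of "{..<j}" "{j..<c}" "\<lambda>_. Q"] un by simp
  have D: "distr (PiM {..<j} (\<lambda>_. Q) \<Otimes>\<^sub>M ?\<nu>) (PiM {..<c} (\<lambda>_. Q)) ?T = PiM {..<c} (\<lambda>_. Q)"
    using PS.distr_merge[of "{..<j}" "{j..<c}"] un by (simp add: Int_def)
  have shift_T: "(\<lambda>l. ?T (x, y) (l + j)) = ?R y" for x y :: "nat \<Rightarrow> 'a"
    using jc by (auto simp: merge_def fun_eq_iff)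
  have F_T: "F (?T (x, y)) = F x" for x y :: "nat \<Rightarrow> 'a"
    by (rule Floc) (simp add: merge_def)
  have Rm: "?R \<in> measurable ?\<nu> (PiM {..<c-j} (\<lambda>_. Q))"
    by (intro measurable_restrict measurable_component_singleton) auto
  have Rd: "distr ?\<nu> (PiM {..<c-j} (\<lambda>_. Q)) ?R = PiM {..<c-j} (\<lambda>_. Q)"
  proof -
    have "(\<lambda>l. l + j) \<in> {..<c-j} \<rightarrow> {j..<c}" using jc by auto
    then show ?thesis
      using distr_PiM_reindex[of "{j..<c}" "\<lambda>_. Q" "\<lambda>l. l + j" "{..<c-j}"] Q
      by (auto simp: inj_on_def)
  qed
  have Feq: "F = (\<lambda>w. F (restrict w {..<j}))"
    by (rule ext, rule Floc) simp
  have Fc: "F \<in> borel_measurable (PiM {..<c} (\<lambda>_. Q))"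
    by (subst Feq, rule measurable_compose[OF measurable_restrict_subset Fm]) (use jc in auto)
  have shm: "(\<lambda>w. \<lambda>l. w (l + j)) \<in> measurable (PiM {..<c} (\<lambda>_. Q)) (PiM {..<c-j} (\<lambda>_. Q))"
  proof -
    have A: "(\<lambda>w. \<lambda>l\<in>{..<c-j}. w (l + j)) \<in> measurable (PiM {..<c} (\<lambda>_. Q)) (PiM {..<c-j} (\<lambda>_. Q))"
      by (intro measurable_restrict measurable_component_singleton) auto
    moreover have eqw: "(\<lambda>l\<in>{..<c-j}. w (l + j)) = (\<lambda>l. w (l + j))" if "w \<in> space (PiM {..<c} (\<lambda>_. Q))" for w
    proof
      fix l show "(\<lambda>l\<in>{..<c-j}. w (l + j)) l = w (l + j)"
      proof (cases "l < c - j")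
        case True then show ?thesis by simp
      next
        case False
        then have "l + j \<notin> {..<c}" by simp
        moreover have "w \<in> PiE {..<c} (\<lambda>_. space Q)" using that by (simp only: space_PiM)
        ultimately have "w (l + j) = undefined" by (rule PiE_arb[rotated])
        then show ?thesis using False by simp
      qed
    qed
    show ?thesis
      using measurable_cong[of "PiM {..<c} (\<lambda>_. Q)" "\<lambda>w. \<lambda>l\<in>{..<c-j}. w (l + j)" "\<lambda>w l. w (l + j)" "PiM {..<c-j} (\<lambda>_. Q)"] eqw A
      by blast
  qed
  have Gc: "(\<lambda>w. G (\<lambda>l. w (l + j))) \<in> borel_measurable (PiM {..<c} (\<lambda>_. Q))"
    using measurable_compose[OF shm Gm] .
  have Phim: "(\<lambda>w. ennreal ((F w * G (\<lambda>l. w (l + j)))\<^sup>2)) \<in> borel_measurable (PiM {..<c} (\<lambda>_. Q))"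
    by (rule meas_sq, rule borel_measurable_times[OF Fc Gc])
  have GRm: "(\<lambda>y. ennreal ((G (?R y))\<^sup>2)) \<in> borel_measurable ?\<nu>"
    by (rule meas_sq, rule measurable_compose[OF Rm Gm])
  have NG: "(\<integral>\<^sup>+y. ennreal ((G (?R y))\<^sup>2) \<partial>?\<nu>) = (\<integral>\<^sup>+x. ennreal ((G x)\<^sup>2) \<partial>PiM {..<c-j} (\<lambda>_. Q))"
  proof -
    have "(\<integral>\<^sup>+x. ennreal ((G x)\<^sup>2) \<partial>PiM {..<c-j} (\<lambda>_. Q))
        = (\<integral>\<^sup>+x. ennreal ((G x)\<^sup>2) \<partial>distr ?\<nu> (PiM {..<c-j} (\<lambda>_. Q)) ?R)"
      by (simp only: Rd)
    also have "\<dots> = (\<integral>\<^sup>+y. ennreal ((G (?R y))\<^sup>2) \<partial>?\<nu>)"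
      by (rule nn_integral_distr[OF Rm]) (use meas_sq[OF Gm] in simp)
    finally show ?thesis by simp
  qed
  have "(\<integral>\<^sup>+x. ennreal ((F x * G (\<lambda>l. x (l + j)))\<^sup>2) \<partial>PiM {..<c} (\<lambda>_. Q))
      = (\<integral>\<^sup>+x. ennreal ((F x * G (\<lambda>l. x (l + j)))\<^sup>2) \<partial>distr (PiM {..<j} (\<lambda>_. Q) \<Otimes>\<^sub>M ?\<nu>) (PiM {..<c} (\<lambda>_. Q)) ?T)"
    by (simp only: D)
  also have "\<dots> = (\<integral>\<^sup>+z. ennreal ((F (?T z) * G (\<lambda>l. ?T z (l + j)))\<^sup>2) \<partial>(PiM {..<j} (\<lambda>_. Q) \<Otimes>\<^sub>M ?\<nu>))"
    by (rule nn_integral_distr[OF Tm]) (use Phim in simp)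
  also have "\<dots> = (\<integral>\<^sup>+x. \<integral>\<^sup>+y. ennreal ((F (?T (x, y)) * G (\<lambda>l. ?T (x, y) (l + j)))\<^sup>2) \<partial>?\<nu> \<partial>PiM {..<j} (\<lambda>_. Q))"
    by (rule N.nn_integral_fst[symmetric]) (rule measurable_compose[OF Tm Phim])
  also have "\<dots> = (\<integral>\<^sup>+x. \<integral>\<^sup>+y. ennreal ((F x)\<^sup>2) * ennreal ((G (?R y))\<^sup>2) \<partial>?\<nu> \<partial>PiM {..<j} (\<lambda>_. Q))"
    by (simp only: F_T shift_T power_mult_distrib ennreal_mult zero_le_power2)
  also have "\<dots> = (\<integral>\<^sup>+x. ennreal ((F x)\<^sup>2) * (\<integral>\<^sup>+y. ennreal ((G (?R y))\<^sup>2) \<partial>?\<nu>) \<partial>PiM {..<j} (\<lambda>_. Q))"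
    by (simp only: nn_integral_cmult[OF GRm])
  also have "\<dots> = (\<integral>\<^sup>+x. ennreal ((F x)\<^sup>2) \<partial>PiM {..<j} (\<lambda>_. Q)) * (\<integral>\<^sup>+x. ennreal ((G x)\<^sup>2) \<partial>PiM {..<c-j} (\<lambda>_. Q))"
    by (simp only: NG nn_integral_multc[OF meas_sq[OF Fm]])
  finally show ?thesis .
qed


lemma htilde_bound:
  fixes m r :: nat and h :: "(nat \<Rightarrow> 'a) \<Rightarrow> real"
  assumes Q: "prob_space Q" and hm: "h \<in> borel_measurable (PiM {..<m} (\<lambda>_. Q))"
    and hM: "(\<integral>\<^sup>+x. ennreal ((h x)\<^sup>2) \<partial>PiM {..<m} (\<lambda>_. Q)) \<le> ennreal M0" and M0: "0 \<le> M0"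
    and rm: "r \<le> m"
  shows "htilde Q m h r \<in> borel_measurable (PiM {..<r} (\<lambda>_. Q))"
    and "(\<integral>\<^sup>+x. ennreal ((htilde Q m h r x)\<^sup>2) \<partial>PiM {..<r} (\<lambda>_. Q)) \<le> ennreal (2*M0 + 2*M0)"
proof -
  have eq: "htilde Q m h r = (\<lambda>x. hc Q m h r x - theta Q m h)"
    by (rule ext) (simp add: htilde_def)
  have th: "(theta Q m h)\<^sup>2 \<le> M0"
    using order_trans[OF sq_int_le[OF PiM_prob[OF Q]] hM] M0
    unfolding theta_def by (simp add: ennreal_le_iff)
  have hcm: "hc Q m h r \<in> borel_measurable (PiM {..<r} (\<lambda>_. Q))" by (rule hc_meas[OF Q hm rm])
  show "htilde Q m h r \<in> borel_measurable (PiM {..<r} (\<lambda>_. Q))"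
    unfolding eq by (rule borel_measurable_diff[OF hcm borel_measurable_const])
  show "(\<integral>\<^sup>+x. ennreal ((htilde Q m h r x)\<^sup>2) \<partial>PiM {..<r} (\<lambda>_. Q)) \<le> ennreal (2*M0 + 2*M0)"
    unfolding eq
    by (rule sq_diff_le[OF PiM_prob[OF Q] hcm order_trans[OF hc_sq[OF Q hm rm] hM] M0 th])
qed

lemma zeta_bound:
  fixes m c j :: nat and h :: "(nat \<Rightarrow> 'a) \<Rightarrow> real"
  assumes Q: "prob_space Q" and hm: "h \<in> borel_measurable (PiM {..<m} (\<lambda>_. Q))"
    and hM: "(\<integral>\<^sup>+x. ennreal ((h x)\<^sup>2) \<partial>PiM {..<m} (\<lambda>_. Q)) \<le> ennreal M0" and M0: "0 \<le> M0"
    and jc: "j \<le> c" and cm: "c \<le> m"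
  shows "\<bar>zeta3 Q m h c j\<bar> \<le> 2 * (2*M0 + 2*M0) + 2 * ((2*M0 + 2*M0) * (2*M0 + 2*M0))"
proof -
  note b1 = htilde_bound[OF Q hm hM M0]
  have jm: "j \<le> m" and cjm: "c - j \<le> m" using jc cm by auto
  have loc: "htilde Q m h j x = htilde Q m h j x'" if "\<And>l. l < j \<Longrightarrow> x l = x' l" for x x'
    by (rule htilde_cong) (use that in auto)
  have Vm: "(\<lambda>x. htilde Q m h j x * htilde Q m h (c - j) (\<lambda>l. x (l + j))) \<in> borel_measurable (PiM {..<c} (\<lambda>_. Q))"
    by (rule prod_meas[OF Q jc b1(1)[OF jm] b1(1)[OF cjm] loc])
  have VB: "(\<integral>\<^sup>+x. ennreal ((htilde Q m h j x * htilde Q m h (c - j) (\<lambda>l. x (l + j)))\<^sup>2) \<partial>PiM {..<c} (\<lambda>_. Q))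
      \<le> ennreal ((2*M0 + 2*M0) * (2*M0 + 2*M0))"
  proof -
    have "(\<integral>\<^sup>+x. ennreal ((htilde Q m h j x * htilde Q m h (c - j) (\<lambda>l. x (l + j)))\<^sup>2) \<partial>PiM {..<c} (\<lambda>_. Q))
       = (\<integral>\<^sup>+x. ennreal ((htilde Q m h j x)\<^sup>2) \<partial>PiM {..<j} (\<lambda>_. Q)) * (\<integral>\<^sup>+x. ennreal ((htilde Q m h (c - j) x)\<^sup>2) \<partial>PiM {..<c-j} (\<lambda>_. Q))"
      by (rule prod_sq[OF Q jc b1(1)[OF jm] b1(1)[OF cjm] loc])
    also have "\<dots> \<le> ennreal (2*M0 + 2*M0) * ennreal (2*M0 + 2*M0)"
      by (rule mult_mono[OF b1(2)[OF jm] b1(2)[OF cjm]]) auto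
    also have "\<dots> = ennreal ((2*M0 + 2*M0) * (2*M0 + 2*M0))"
      using M0 by (simp only: ennreal_mult[symmetric] add_nonneg_nonneg mult_nonneg_nonneg zero_le_numeral)
    finally show ?thesis .
  qed
  have "\<bar>cov (PiM {..<c} (\<lambda>_. Q)) (\<lambda>x. htilde Q m h c x) (\<lambda>x. htilde Q m h j x * htilde Q m h (c - j) (\<lambda>l. x (l + j)))\<bar>
      \<le> 2 * (2*M0 + 2*M0) + 2 * ((2*M0 + 2*M0) * (2*M0 + 2*M0))"
    by (rule cov_bound[OF PiM_prob[OF Q] _ Vm _ VB]) (use b1[OF cm] M0 in auto)
  then show ?thesis unfolding zeta3_def .
qed



lemma binom_lower:
  fixes n k :: nat
  assumes k1: "1 \<le> k" and kn: "k \<le> n"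
  shows "(real n / (real k)\<^sup>2) ^ k \<le> real (n choose k)"
proof -
  have "(real n / (real k)\<^sup>2) ^ k = (\<Prod>i = 0..<k. real n / (real k)\<^sup>2)" by simp
  also have "\<dots> \<le> (\<Prod>i = 0..<k. real (n - i) / real (k - i))"
  proof (rule prod_mono)
    fix i assume i: "i \<in> {0..<k}"
    then have ik: "i < k" by simp
    have kpos: "0 < real k" using k1 by simp
    have "real n \<le> real (n - i) * real k"
    proof -
      have "i * k \<le> (k - 1) * k" using ik by (intro mult_right_mono) auto
      also have "\<dots> \<le> (k - 1) * n" using kn by (intro mult_left_mono) auto
      finally have X: "i * k \<le> (k - 1) * n" .
      have "(k - 1) * n + n = k * n" using k1 by (cases k) auto
      with X have "n + i * k \<le> n * k" by (simp add: mult.commute)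
      then have "real n + real i * real k \<le> real n * real k" by (metis of_nat_add of_nat_le_iff of_nat_mult)
      moreover have "real (n - i) = real n - real i" using ik kn by simp
      ultimately show ?thesis by (simp add: algebra_simps)
    qed
    then have "real n / real k \<le> real (n - i)" using kpos by (simp add: divide_le_eq)
    then have "(real n / real k) / real k \<le> real (n - i) / real k"
      using kpos by (intro divide_right_mono) auto
    then have "real n / (real k)\<^sup>2 \<le> real (n - i) / real k"
      by (simp add: power2_eq_square)
    also have "\<dots> \<le> real (n - i) / real (k - i)"
      using ik by (intro divide_left_mono) auto
    finally show "0 \<le> real n / (real k)\<^sup>2 \<and> real n / (real k)\<^sup>2 \<le> real (n - i) / real (k - i)"
      by simp
  qed
  also have "\<dots> = real (n choose k)" by (rule binomial_altdef_of_nat[OF kn, symmetric])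
  finally show ?thesis .
qed

lemma ratio_bound:
  fixes n n0 m c :: nat
  assumes m1: "1 \<le> m" and c2: "2 \<le> c" and cm: "c \<le> m" and n2m: "2 * m \<le> n"
    and n0n: "n0 \<le> n"
  shows "(real n0)\<^sup>2 * real ((n - m) choose (2*m - c)) / real (n choose (2*m)) \<le> (4 * (real m)\<^sup>2) ^ (2*m)"
proof -
  define K where "K = (4 * (real m)\<^sup>2) ^ (2*m)"
  have npos: "0 < real n" using n2m m1 by simp
  have Kpos: "0 < K" unfolding K_def using m1 by simp
  have lb: "(real n / (real (2*m))\<^sup>2) ^ (2*m) \<le> real (n choose (2*m))"
    by (rule binom_lower) (use m1 n2m in auto)
  have "(real n / (real (2*m))\<^sup>2) ^ (2*m) = real n ^ (2*m) / K"
    unfolding K_def by (simp add: power_divide power_mult_distrib)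
  with lb have lb2: "real n ^ (2*m) \<le> real (n choose (2*m)) * K"
    using Kpos by (simp add: divide_le_eq)
  have Cpos: "0 < real (n choose (2*m))" using n2m by simp
  have ub: "real ((n - m) choose (2*m - c)) \<le> real n ^ (2*m - 2)"
  proof (cases "2*m - c \<le> n - m")
    case True
    have "real ((n - m) choose (2*m - c)) \<le> real ((n - m) ^ (2*m - c))"
      using binomial_le_pow[OF True] by (simp only: of_nat_le_iff)
    also have "\<dots> \<le> real n ^ (2*m - c)" by (simp add: power_mono)
    also have "\<dots> \<le> real n ^ (2*m - 2)" using npos c2 by (intro power_increasing) auto
    finally show ?thesis .
  next
    case False then show ?thesis by (simp add: binomial_eq_0)
  qed
  have "(real n0)\<^sup>2 * real ((n - m) choose (2*m - c)) \<le> (real n)\<^sup>2 * real n ^ (2*m - 2)"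
    using n0n ub by (intro mult_mono power_mono) auto
  also have "\<dots> = real n ^ (2*m)"
  proof -
    obtain q where q1: "2*m - 2 = q" and q2: "2*m = q + 2" using m1 by (intro that[of "2*m-2"]) auto
    show ?thesis unfolding q1 unfolding q2 by (simp add: power_add power2_eq_square)
  qed
  also have "\<dots> \<le> real (n choose (2*m)) * K" by (rule lb2)
  finally show ?thesis unfolding K_def[symmetric] using Cpos
    by (simp add: divide_le_eq mult.commute)
qed



theorem lemma8:
  fixes E :: "'a measure" and m :: nat and h :: "(nat \<Rightarrow> 'a) \<Rightarrow> real"
    and P :: "nat \<Rightarrow> nat \<Rightarrow> 'a measure"  \<comment> \<open>P k i: distribution of X_i in problem k\<close>
    and n :: "nat \<Rightarrow> nat \<Rightarrow> nat"  \<comment> \<open>n k i: sample size n_i in problem k\<close>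
    and n0 :: "nat \<Rightarrow> nat"
  assumes m: "m \<ge> 1"
    and kernel: "sym_kernel E m h"
    and A0: "\<And>k i. i \<in> {1..k} \<Longrightarrow>
               prob_space (P k i) \<and> sets (P k i) = sets E \<and> n k i \<ge> 2 * m"
    and A1: "\<exists>M>0. \<forall>k. \<forall>i\<in>{1..k}.
               (\<integral>\<^sup>+ x. ennreal ((h x)\<^sup>2) \<partial>(PiM {..<m} (\<lambda>_. P k i))) < ennreal M"
    and A2: "\<exists>C>0. \<forall>k. n0 k \<ge> 2 * m \<and>
               (\<forall>i\<in>{1..k}. \<exists>c::real. real (n k i) = c * real (n0 k) \<and> 1 \<le> c \<and> c \<le> C)"
  shows "\<exists>M>0. \<forall>k. \<forall>i\<in>{1..k}. (real (n0 k))\<^sup>2 * \<bar>Xi3 (P k i) m h (n k i)\<bar> \<le> M"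
proof -
  obtain M where M0: "M > 0" and hM: "\<forall>k. \<forall>i\<in>{1..k}.
               (\<integral>\<^sup>+ x. ennreal ((h x)\<^sup>2) \<partial>(PiM {..<m} (\<lambda>_. P k i))) < ennreal M"
    using A1 by blast
  obtain C where A2': "\<forall>k. n0 k \<ge> 2 * m \<and>
               (\<forall>i\<in>{1..k}. \<exists>c::real. real (n k i) = c * real (n0 k) \<and> 1 \<le> c \<and> c \<le> C)"
    using A2 by blast
  define Z where "Z = 2 * (2*M + 2*M) + 2 * ((2*M + 2*M) * (2*M + 2*M))"
  define K where "K = (4 * (real m)\<^sup>2) ^ (2*m)"
  define T' where "T' c = (\<Sum>j=1..c. real (c choose j) * real ((2*m - c) choose (m - j)) * Z)" for c
  define B where "B = 4 * (\<Sum>c=1..m. K * real (m choose c) * T' c) + 1"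
  have Z0: "0 \<le> Z" unfolding Z_def using M0 by simp
  have K0: "0 \<le> K" unfolding K_def by simp
  have T'0: "0 \<le> T' c" for c unfolding T'_def using Z0 by (intro sum_nonneg) simp
  have Bpos: "B > 0" unfolding B_def using K0 T'0 by (simp add: sum_nonneg add_nonneg_pos)
  show ?thesis
  proof (intro exI[of _ B] conjI allI ballI Bpos)
    fix k i :: nat assume i: "i \<in> {1..k}"
    define Q where "Q = P k i"
    define nn where "nn = n k i"
    define N0 where "N0 = n0 k"
    have Q: "prob_space Q" and sQ: "sets Q = sets E" and nn2: "2 * m \<le> nn"
      using A0[OF i] unfolding Q_def nn_def by auto
    have sets_eq: "sets (PiM {..<m} (\<lambda>_. Q)) = sets (PiM {..<m} (\<lambda>_. E))"
      by (rule sets_PiM_cong) (auto simp: sQ)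
    have hm: "h \<in> borel_measurable (PiM {..<m} (\<lambda>_. Q))"
    proof -
      have "h \<in> borel_measurable (PiM {..<m} (\<lambda>_. E))" using kernel unfolding sym_kernel_def by blast
      then show ?thesis by (subst measurable_cong_sets[OF sets_eq refl])
    qed
    have hMi: "(\<integral>\<^sup>+ x. ennreal ((h x)\<^sup>2) \<partial>(PiM {..<m} (\<lambda>_. Q))) \<le> ennreal M"
      using hM i unfolding Q_def by (auto intro: less_imp_le)
    have zb: "\<bar>zeta3 Q m h c j\<bar> \<le> Z" if "j \<le> c" "c \<le> m" for c j
      unfolding Z_def by (rule zeta_bound[OF Q hm hMi _ that]) (use M0 in simp)
    have N0n: "N0 \<le> nn"
    proof -
      obtain c' :: real where "real nn = c' * real N0" "1 \<le> c'"
        using A2' i unfolding nn_def N0_def by blast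
      then have "real N0 \<le> real nn" using mult_right_mono[of 1 c' "real N0"] by simp
      then show ?thesis by simp
    qed
    define Cn where "Cn = real (nn choose (2*m))"
    define Cb where "Cb = real ((2*m) choose m)"
    define a where "a c = real ((nn - m) choose (2*m - c))" for c
    define T where "T c = (\<Sum>j=1..c. real (c choose j) * real ((2*m - c) choose (m - j)) * \<bar>zeta3 Q m h c j\<bar>)" for c
    have Cn0: "0 < Cn" unfolding Cn_def using nn2 by simp
    have Cb1: "1 \<le> Cb" unfolding Cb_def
      by (metis One_nat_def Suc_leI le_add2 mult_2 of_nat_1 of_nat_le_iff zero_less_binomial)
    have a0: "0 \<le> a c" for c unfolding a_def by simp
    have T0: "0 \<le> T c" for c unfolding T_def by (intro sum_nonneg) simp
    have Xi: "Xi3 Q m h nn = 4 / (Cn * Cb) * (\<Sum>c=1..m. a c * real (m choose c) *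
        (\<Sum>j=1..c. real (c choose j) * real ((2*m - c) choose (m - j)) * zeta3 Q m h c j))"
      unfolding Xi3_def Cn_def Cb_def a_def ..
    have absS: "\<bar>\<Sum>c=1..m. a c * real (m choose c) *
        (\<Sum>j=1..c. real (c choose j) * real ((2*m - c) choose (m - j)) * zeta3 Q m h c j)\<bar>
        \<le> (\<Sum>c=1..m. a c * real (m choose c) * T c)"
    proof -
      have "\<bar>\<Sum>c=1..m. a c * real (m choose c) *
        (\<Sum>j=1..c. real (c choose j) * real ((2*m - c) choose (m - j)) * zeta3 Q m h c j)\<bar>
        \<le> (\<Sum>c=1..m. \<bar>a c * real (m choose c) *
        (\<Sum>j=1..c. real (c choose j) * real ((2*m - c) choose (m - j)) * zeta3 Q m h c j)\<bar>)"
        by (rule sum_abs)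
      also have "\<dots> \<le> (\<Sum>c=1..m. a c * real (m choose c) * T c)"
      proof (rule sum_mono)
        fix c
        have "\<bar>\<Sum>j=1..c. real (c choose j) * real ((2*m - c) choose (m - j)) * zeta3 Q m h c j\<bar> \<le> T c"
          unfolding T_def by (rule order_trans[OF sum_abs]) (simp add: abs_mult)
        then show "\<bar>a c * real (m choose c) *
          (\<Sum>j=1..c. real (c choose j) * real ((2*m - c) choose (m - j)) * zeta3 Q m h c j)\<bar>
          \<le> a c * real (m choose c) * T c"
          using a0[of c] by (simp add: abs_mult mult_left_mono)
      qed
      finally show ?thesis .
    qed
    have trm: "((real N0)\<^sup>2 * a c / Cn) * real (m choose c) * T c \<le> K * real (m choose c) * T' c"
      if c: "c \<in> {1..m}" for c
    proof (cases "c = 1")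
      case True
      have "T c = 0" unfolding T_def True using zeta3_11[of Q m h] by simp
      then show ?thesis using K0 T'0[of c] by simp
    next
      case False
      with c have c2: "2 \<le> c" and cm: "c \<le> m" by auto
      have r: "(real N0)\<^sup>2 * a c / Cn \<le> K"
        unfolding a_def Cn_def K_def by (rule ratio_bound[OF m c2 cm nn2 N0n])
      have t: "T c \<le> T' c"
        unfolding T_def T'_def using zb cm
        by (intro sum_mono mult_left_mono) auto
      show ?thesis
        using r t Cn0 a0[of c] T0[of c] K0
        by (intro mult_mono) (auto intro: divide_nonneg_pos)
    qed
    have "(real N0)\<^sup>2 * \<bar>Xi3 Q m h nn\<bar> = (real N0)\<^sup>2 * (4 / (Cn * Cb)) * \<bar>\<Sum>c=1..m. a c * real (m choose c) *
        (\<Sum>j=1..c. real (c choose j) * real ((2*m - c) choose (m - j)) * zeta3 Q m h c j)\<bar>"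
      unfolding Xi using Cn0 Cb1 by (simp add: abs_mult)
    also have "\<dots> \<le> (real N0)\<^sup>2 * (4 / Cn) * (\<Sum>c=1..m. a c * real (m choose c) * T c)"
    proof (rule mult_mono[OF _ absS])
      show "(real N0)\<^sup>2 * (4 / (Cn * Cb)) \<le> (real N0)\<^sup>2 * (4 / Cn)"
        using Cn0 Cb1 by (intro mult_left_mono) (auto simp: divide_simps)
    qed (use Cn0 in auto)
    also have "\<dots> = 4 * (\<Sum>c=1..m. ((real N0)\<^sup>2 * a c / Cn) * real (m choose c) * T c)"
      by (simp add: sum_distrib_left algebra_simps)
    also have "\<dots> \<le> 4 * (\<Sum>c=1..m. K * real (m choose c) * T' c)"
      using trm by (intro mult_left_mono sum_mono) auto
    also have "\<dots> \<le> B" unfolding B_def by simp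
    finally show "(real (n0 k))\<^sup>2 * \<bar>Xi3 (P k i) m h (n k i)\<bar> \<le> B"
      unfolding Q_def nn_def N0_def .
  qed
qed

end
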